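(* In the setting described in the context, if $m\in S$ then $g_m\in\widetilde{I}$.
   Context: $\Phi$ is a commutative ring with unity $1\ne0$, regarded as a differential ring with the commuting derivations $\delta_1,\delta_2$ acting as zero. $S\subseteq\mathbb{N}$ is recursively enumerable and $M$ is a two-tape acyclic Minsky machine with states $q_0,\ldots,q_n$ ($q_0$ terminal) such that for every $x\in\mathbb{N}$, starting at configuration $[1,2^{2^x},0]$, $M$ reaches $[0,1,0]$ in finitely many steps if $x\in S$ and operates infinitely if $x\notin S$. Minsky machine conventions: two tapes infinite to the right with cells $0,1,2,\ldots$; cell $0$ contains $1$, all others $0$; a configuration $[i,a,b]$ means state $q_i$, head at cell $a$ of tape 1 and cell $b$ of tape 2. Commands are $q_i\varepsilon\sigma\to q_jT_\alpha T_\beta$ with $1\le i\le n$, $0\le j\le n$, $\varepsilon,\sigma\in\{0,1\}$, $\alpha,\beta\in\{-1,0,1\}$, $\alpha\ge0$ if $\varepsilon=1$, $\beta\ge0$ if $\sigma=1$, at most one per triple $(i,\varepsilon,\sigma)$; such a command applies to $[i,a,b]$ when ($\varepsilon=1$ iff $a=0$) and ($\sigma=1$ iff $b=0$), producing $[j,a+\alpha,b+\beta]$. Acyclic means no configuration recurs after a positive number of steps. $A=\Phi\{x_1,x_2,q_0,\ldots,q_n\}$ is the differential polynomial ring w.r.t. $\delta_1,\delta_2$ (polynomial ring in independent variables $\delta_1^a\delta_2^b(y)$, $y\in\{x_1,x_2,q_0,\ldots,q_n\}$, $\delta_1,\delta_2$ raising the corresponding exponent). $J$ is the differential ideal generated by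 $\delta_1(x_2),\delta_2(x_1)$, and $B=A/J$. For each command of $M$, $g(i,\varepsilon,\sigma)$ is the image in $B$ of $x_1^{\varepsilon}x_2^{\sigma}\delta_1^{1-\varepsilon}\delta_2^{1-\sigma}(q_i)-x_1^{\varepsilon}x_2^{\sigma}\delta_1^{1-\varepsilon+\alpha}\delta_2^{1-\sigma+\beta}(q_j)$; $\widetilde{I}$ is the differential ideal of $B$ generated by all $g(i,\varepsilon,\sigma)$; and $g_m$ is the image in $B$ of $x_1x_2\delta_1^{2^{2^m}}(q_1)-x_1x_2\delta_1(q_0)$. *)

theory Defs
  imports "HOL-Library.Poly_Mapping" "HOL-Algebra.QuotRing"
begin

text \<open>A machine with states q0..qn is a partial map from (i, eps, sigma) to (j, alpha, beta),
  where eps = True means the symbol 1 (i.e. head at cell 0) on tape 1, likewise sigma for tape 2.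
  Representing it as a partial function encodes "at most one command per triple".\<close>

type_synonym minsky = "nat \<Rightarrow> bool \<Rightarrow> bool \<Rightarrow> (nat \<times> int \<times> int) option"

definition minsky_wf :: "nat \<Rightarrow> minsky \<Rightarrow> bool" where
  "minsky_wf n M \<longleftrightarrow>
     (\<forall>i e s. (i < 1 \<or> n < i) \<longrightarrow> M i e s = None) \<and>
     (\<forall>i e s j \<alpha> \<beta>. M i e s = Some (j, \<alpha>, \<beta>) \<longrightarrow>
        j \<le> n \<and> \<alpha> \<in> {-1, 0, 1} \<and> \<beta> \<in> {-1, 0, 1} \<and> (e \<longrightarrow> \<alpha> \<ge> 0) \<and> (s \<longrightarrow> \<beta> \<ge> 0))"

definition mstep :: "minsky \<Rightarrow> nat \<times> nat \<times> nat \<Rightarrow> nat \<times> nat \<times> nat \<Rightarrow> bool" where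
  "mstep M c c' \<longleftrightarrow> (case c of (i, a, b) \<Rightarrow> case c' of (j, a', b') \<Rightarrow>
     (\<exists>\<alpha> \<beta>. M i (a = 0) (b = 0) = Some (j, \<alpha>, \<beta>) \<and>
        int a' = int a + \<alpha> \<and> int b' = int b + \<beta>))"

definition minsky_acyclic :: "minsky \<Rightarrow> bool" where
  "minsky_acyclic M \<longleftrightarrow> (\<forall>c. \<not> (mstep M)\<^sup>+\<^sup>+ c c)"

definition reaches :: "minsky \<Rightarrow> nat \<times> nat \<times> nat \<Rightarrow> nat \<times> nat \<times> nat \<Rightarrow> bool" where
  "reaches M c c' \<longleftrightarrow> (mstep M)\<^sup>*\<^sup>* c c'"

definition runs_forever :: "minsky \<Rightarrow> nat \<times> nat \<times> nat \<Rightarrow> bool" where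
  "runs_forever M c \<longleftrightarrow> (\<forall>c'. (mstep M)\<^sup>*\<^sup>* c c' \<longrightarrow> (\<exists>c''. mstep M c' c''))"

datatype dbase = X1 | X2 | Q nat
datatype der = D1 | D2

text \<open>(y, a, b) stands for the differential variable delta1^a delta2^b (y).\<close>
type_synonym dvar = "dbase \<times> nat \<times> nat"
type_synonym 'a dpoly = "(dvar \<Rightarrow>\<^sub>0 nat) \<Rightarrow>\<^sub>0 'a"

definition Var :: "dvar \<Rightarrow> 'a::comm_ring_1 dpoly" where
  "Var v = Poly_Mapping.single (Poly_Mapping.single v 1) 1"

fun sh :: "der \<Rightarrow> dvar \<Rightarrow> dvar" where
  "sh D1 (y, a, b) = (y, Suc a, b)"
| "sh D2 (y, a, b) = (y, a, Suc b)"

text \<open>The derivation: zero on coefficients, Leibniz rule, sending the variable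
  (y,a,b) to its shift. Explicitly, on a monomial mu it is
  sum over v of mu(v) * (mu - v + sh v).\<close>
definition deriv :: "der \<Rightarrow> 'a::comm_ring_1 dpoly \<Rightarrow> 'a dpoly" where
  "deriv d p = sum (\<lambda>\<mu>. sum (\<lambda>v.
      Poly_Mapping.single (\<mu> - Poly_Mapping.single v 1 + Poly_Mapping.single (sh d v) 1)
        (of_nat (Poly_Mapping.lookup \<mu> v) * Poly_Mapping.lookup p \<mu>)) (Poly_Mapping.keys \<mu>))
      (Poly_Mapping.keys p)"

fun valid_var :: "nat \<Rightarrow> dvar \<Rightarrow> bool" where
  "valid_var n (Q i, _, _) = (i \<le> n)"
| "valid_var n _ = True"

definition A_ring :: "nat \<Rightarrow> ('a::comm_ring_1 dpoly) ring" where
  "A_ring n = \<lparr>carrier = {p. \<forall>\<mu>\<in>Poly_Mapping.keys p. \<forall>v\<in>Poly_Mapping.keys \<mu>. valid_var n v},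
               monoid.mult = (*), one = 1, zero = 0, add = (+)\<rparr>"

definition diff_ideal_gen :: "('b, 'c) ring_scheme \<Rightarrow> (der \<Rightarrow> 'b \<Rightarrow> 'b) \<Rightarrow> 'b set \<Rightarrow> 'b set" where
  "diff_ideal_gen R D G = \<Inter>{I. ideal I R \<and> G \<subseteq> I \<and> (\<forall>d. \<forall>x\<in>I. D d x \<in> I)}"

definition dop :: "nat \<Rightarrow> nat \<Rightarrow> dbase \<Rightarrow> 'a::comm_ring_1 dpoly" where
  "dop a b y = (deriv D1 ^^ a) ((deriv D2 ^^ b) (Var (y, 0, 0)))"

definition J_ideal :: "nat \<Rightarrow> ('a::comm_ring_1 dpoly) set" where
  "J_ideal n = diff_ideal_gen (A_ring n) deriv {deriv D1 (Var (X2, 0, 0)), deriv D2 (Var (X1, 0, 0))}"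

definition B_ring :: "nat \<Rightarrow> ('a::comm_ring_1 dpoly) set ring" where
  "B_ring n = A_ring n Quot J_ideal n"

text \<open>Induced derivations on B = A/J: the class of delta(x) for x in the class X.\<close>
definition derivB :: "nat \<Rightarrow> der \<Rightarrow> ('a::comm_ring_1 dpoly) set \<Rightarrow> 'a dpoly set" where
  "derivB n d X = J_ideal n <+>\<^bsub>A_ring n\<^esub> (deriv d ` X)"

definition classB :: "nat \<Rightarrow> 'a::comm_ring_1 dpoly \<Rightarrow> 'a dpoly set" where
  "classB n p = J_ideal n +>\<^bsub>A_ring n\<^esub> p"

definition g_lift :: "minsky \<Rightarrow> nat \<Rightarrow> bool \<Rightarrow> bool \<Rightarrow> 'a::comm_ring_1 dpoly" where
  "g_lift M i e s = (case M i e s of None \<Rightarrow> 0 | Some (j, \<alpha>, \<beta>) \<Rightarrow>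
      Var (X1, 0, 0) ^ of_bool e * Var (X2, 0, 0) ^ of_bool s * dop (1 - of_bool e) (1 - of_bool s) (Q i)
    - Var (X1, 0, 0) ^ of_bool e * Var (X2, 0, 0) ^ of_bool s
        * dop (nat (1 - of_bool e + \<alpha>)) (nat (1 - of_bool s + \<beta>)) (Q j))"

definition I_tilde :: "nat \<Rightarrow> minsky \<Rightarrow> ('a::comm_ring_1 dpoly) set set" where
  "I_tilde n M = diff_ideal_gen (B_ring n) (derivB n)
     {classB n (g_lift M i e s) | i e s. M i e s \<noteq> None}"

definition g_m :: "nat \<Rightarrow> nat \<Rightarrow> ('a::comm_ring_1 dpoly) set" where
  "g_m n m = classB n (Var (X1, 0, 0) * Var (X2, 0, 0) * dop (2 ^ 2 ^ m) 0 (Q 1)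
                      - Var (X1, 0, 0) * Var (X2, 0, 0) * dop 1 0 (Q 0))"

end

theory Submission
  imports Defs
begin


definition validp :: "nat \<Rightarrow> 'a::comm_ring_1 dpoly \<Rightarrow> bool" where
  "validp n p \<longleftrightarrow> (\<forall>\<mu>\<in>Poly_Mapping.keys p. \<forall>v\<in>Poly_Mapping.keys \<mu>. valid_var n v)"

lemma carrier_A: "carrier (A_ring n) = {p. validp n p}"
  by (simp add: A_ring_def validp_def)

lemma keys_add_nat: "v \<in> Poly_Mapping.keys ((\<mu>::dvar \<Rightarrow>\<^sub>0 nat) + \<nu>) \<Longrightarrow> v \<in> Poly_Mapping.keys \<mu> \<or> v \<in> Poly_Mapping.keys \<nu>"
  by (simp add: in_keys_iff lookup_add)

lemma validp_add: "validp n p \<Longrightarrow> validp n q \<Longrightarrow> validp n (p + q)"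
  unfolding validp_def by (meson UnE keys_add subsetD)

lemma validp_uminus: "validp n p \<Longrightarrow> validp n (- p)"
  unfolding validp_def by simp

lemma validp_diff: "validp n p \<Longrightarrow> validp n q \<Longrightarrow> validp n (p - q)"
  unfolding validp_def by (meson UnE keys_diff subsetD)

lemma validp_zero: "validp n 0" by (simp add: validp_def)
lemma validp_one: "validp n 1" 
  unfolding validp_def by simp

lemma validp_mult: "validp n p \<Longrightarrow> validp n q \<Longrightarrow> validp n (p * q)"
  unfolding validp_def
proof (intro ballI)
  fix \<mu> v assume p: "\<forall>\<mu>\<in>Poly_Mapping.keys p. \<forall>v\<in>Poly_Mapping.keys \<mu>. valid_var n v"
    and q: "\<forall>\<mu>\<in>Poly_Mapping.keys q. \<forall>v\<in>Poly_Mapping.keys \<mu>. valid_var n v"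
    and m: "\<mu> \<in> Poly_Mapping.keys (p * q)" and v: "v \<in> Poly_Mapping.keys \<mu>"
  from subsetD[OF keys_mult m] obtain a b where ab: "\<mu> = a + b" "a \<in> Poly_Mapping.keys p" "b \<in> Poly_Mapping.keys q" by auto
  from keys_add_nat[of v a b] v ab(1) have "v \<in> Poly_Mapping.keys a \<or> v \<in> Poly_Mapping.keys b" by simp
  then show "valid_var n v" using p q ab(2,3) by auto
qed

lemma A_ops [simp]: "x \<oplus>\<^bsub>A_ring n\<^esub> y = x + y" "x \<otimes>\<^bsub>A_ring n\<^esub> y = x * y"
  "\<zero>\<^bsub>A_ring n\<^esub> = 0" "\<one>\<^bsub>A_ring n\<^esub> = 1"
  by (simp_all add: A_ring_def)

lemma A_cring: "cring (A_ring n :: 'a::comm_ring_1 dpoly ring)"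
proof (rule cringI)
  show "abelian_group (A_ring n :: 'a::comm_ring_1 dpoly ring)"
  proof (rule abelian_groupI)
    fix x assume "x \<in> carrier (A_ring n :: 'a::comm_ring_1 dpoly ring)"
    then show "\<exists>y\<in>carrier (A_ring n). y \<oplus>\<^bsub>A_ring n\<^esub> x = \<zero>\<^bsub>A_ring n\<^esub>"
      by (intro bexI[of _ "-x"]) (simp_all add: carrier_A validp_uminus)
  qed (simp_all add: carrier_A validp_add validp_zero algebra_simps)
  show "Group.comm_monoid (A_ring n :: 'a::comm_ring_1 dpoly ring)"
    by (rule comm_monoidI) (simp_all add: carrier_A validp_mult validp_one algebra_simps)
qed (simp_all add: carrier_A distrib_right)



definition dF :: "der \<Rightarrow> (dvar \<Rightarrow>\<^sub>0 nat) \<Rightarrow> 'a::comm_ring_1 \<Rightarrow> 'a dpoly" where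
  "dF d \<mu> c = (\<Sum>v\<in>Poly_Mapping.keys \<mu>. Poly_Mapping.single (\<mu> - Poly_Mapping.single v 1 + Poly_Mapping.single (sh d v) 1)
        (of_nat (Poly_Mapping.lookup \<mu> v) * c))"

lemma deriv_alt: "deriv d p = (\<Sum>\<mu>\<in>Poly_Mapping.keys p. dF d \<mu> (Poly_Mapping.lookup p \<mu>))"
  by (simp add: deriv_def dF_def)

lemma dF_zero: "dF d \<mu> 0 = 0" by (simp add: dF_def)
lemma dF_add: "dF d \<mu> (a + b) = dF d \<mu> a + dF d \<mu> b"
  by (simp add: dF_def distrib_left single_add sum.distrib)

lemma deriv_sup: "finite K \<Longrightarrow> Poly_Mapping.keys p \<subseteq> K \<Longrightarrow> deriv d p = (\<Sum>\<mu>\<in>K. dF d \<mu> (Poly_Mapping.lookup p \<mu>))"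
  unfolding deriv_alt by (rule sum.mono_neutral_left) (auto simp: in_keys_iff dF_zero)

lemma deriv_add: "deriv d (p + q) = deriv d p + deriv d q"
proof -
  let ?K = "Poly_Mapping.keys p \<union> Poly_Mapping.keys q"
  have "deriv d (p + q) = (\<Sum>\<mu>\<in>?K. dF d \<mu> (Poly_Mapping.lookup (p+q) \<mu>))"
    by (rule deriv_sup) (simp_all add: keys_add)
  also have "\<dots> = (\<Sum>\<mu>\<in>?K. dF d \<mu> (Poly_Mapping.lookup p \<mu>)) + (\<Sum>\<mu>\<in>?K. dF d \<mu> (Poly_Mapping.lookup q \<mu>))"
    by (simp add: lookup_add dF_add sum.distrib)
  also have "\<dots> = deriv d p + deriv d q"
    by (simp add: deriv_sup[symmetric])
  finally show ?thesis .
qed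

lemma deriv_diff: "deriv d (p - q) = deriv d p - deriv d q"
  by (metis add_diff_cancel deriv_add diff_add_cancel)

lemma deriv_single: "deriv d (Poly_Mapping.single \<mu> c) = dF d \<mu> c"
  by (subst deriv_sup[where K="{\<mu>}"]) auto

lemma deriv_Var: "deriv d (Var v) = Var (sh d v)"
  by (simp add: Var_def deriv_single dF_def)

lemma deriv_Var2:
  assumes "u \<noteq> w"
  shows "deriv d (Var u * Var w :: 'a::comm_ring_1 dpoly) = Var (sh d u) * Var w + Var u * Var (sh d w)"
proof -
  let ?m = "Poly_Mapping.single u 1 + Poly_Mapping.single w (1::nat)"
  have k: "Poly_Mapping.keys ?m = {u, w}"
    using assms by (auto simp: in_keys_iff lookup_add lookup_single when_def split: if_splits)
  have lu: "Poly_Mapping.lookup ?m u = 1" and lw: "Poly_Mapping.lookup ?m w = 1"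
    using assms by (auto simp: lookup_add lookup_single when_def)
  have e1: "?m - Poly_Mapping.single u 1 = Poly_Mapping.single w 1"
    by simp
  have e2: "?m - Poly_Mapping.single w 1 = Poly_Mapping.single u 1"
    by (metis add_diff_cancel_right')
  have vw: "Var u * Var w = (Poly_Mapping.single ?m 1 :: 'a dpoly)"
    by (simp add: Var_def mult_single)
  have s2: "sum f {u, w} = f u + f w" for f :: "dvar \<Rightarrow> 'a dpoly"
    using assms by simp
  have "deriv d (Var u * Var w :: 'a dpoly) = Poly_Mapping.single (Poly_Mapping.single w 1 + Poly_Mapping.single (sh d u) 1) 1
     + Poly_Mapping.single (Poly_Mapping.single u 1 + Poly_Mapping.single (sh d w) 1) 1"
    unfolding vw deriv_single dF_def k s2 lu lw e1 e2 of_nat_1 mult_1_right ..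
  also have "\<dots> = Var (sh d u) * Var w + Var u * Var (sh d w)"
    by (simp add: Var_def mult_single add.commute)
  finally show ?thesis .
qed

lemma valid_sh[simp]: "valid_var n (sh d v) = valid_var n v"
  by (cases d; cases v; rename_tac y a b; case_tac y; simp)

lemma validp_deriv: "validp n p \<Longrightarrow> validp n (deriv d p)"
  unfolding validp_def deriv_def
proof (intro ballI)
  fix \<nu> x
  assume p: "\<forall>\<mu>\<in>Poly_Mapping.keys p. \<forall>v\<in>Poly_Mapping.keys \<mu>. valid_var n v"
    and nu: "\<nu> \<in> Poly_Mapping.keys (\<Sum>\<mu>\<in>Poly_Mapping.keys p. \<Sum>v\<in>Poly_Mapping.keys \<mu>.
            Poly_Mapping.single (\<mu> - Poly_Mapping.single v 1 + Poly_Mapping.single (sh d v) 1)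
             (of_nat (Poly_Mapping.lookup \<mu> v) * Poly_Mapping.lookup p \<mu> :: 'a))"
    and x: "x \<in> Poly_Mapping.keys \<nu>"
  from subsetD[OF keys_sum nu] obtain \<mu> where mu: "\<mu> \<in> Poly_Mapping.keys p" and
    nu2: "\<nu> \<in> Poly_Mapping.keys (\<Sum>v\<in>Poly_Mapping.keys \<mu>.
            Poly_Mapping.single (\<mu> - Poly_Mapping.single v 1 + Poly_Mapping.single (sh d v) 1)
             (of_nat (Poly_Mapping.lookup \<mu> v) * Poly_Mapping.lookup p \<mu> :: 'a))" by auto
  from subsetD[OF keys_sum nu2] obtain v where v: "v \<in> Poly_Mapping.keys \<mu>" and
    nu3: "\<nu> \<in> Poly_Mapping.keys (Poly_Mapping.single (\<mu> - Poly_Mapping.single v 1 + Poly_Mapping.single (sh d v) 1)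
             (of_nat (Poly_Mapping.lookup \<mu> v) * Poly_Mapping.lookup p \<mu> :: 'a))" by auto
  from nu3 have nu': "\<nu> = \<mu> - Poly_Mapping.single v 1 + Poly_Mapping.single (sh d v) 1"
    by (simp split: if_splits)
  from x nu' have "x \<in> Poly_Mapping.keys \<mu> \<or> x = sh d v"
    by (auto simp: in_keys_iff lookup_add lookup_minus lookup_single when_def split: if_splits)
  then show "valid_var n x" using p mu v by auto
qed

lemma dop_Var: "dop a b y = Var (y, a, b)"
proof -
  have 2: "(deriv D2 ^^ b) (Var (y, 0, 0)) = Var (y, 0, b)" for b
    by (induction b) (simp_all add: deriv_Var)
  have 1: "(deriv D1 ^^ a) (Var (y, 0, b)) = Var (y, a, b)" for a
    by (induction a) (simp_all add: deriv_Var)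
  show ?thesis by (simp add: dop_def 1 2)
qed



lemma validp_Var: "valid_var n v \<Longrightarrow> validp n (Var v)"
  by (simp add: validp_def Var_def)

lemma Var_carrier: "valid_var n v \<Longrightarrow> Var v \<in> carrier (A_ring n)"
  by (simp add: carrier_A validp_Var)

definition JF :: "nat \<Rightarrow> 'a::comm_ring_1 dpoly set set" where
  "JF n = {I. ideal I (A_ring n) \<and> {deriv D1 (Var (X2, 0, 0)), deriv D2 (Var (X1, 0, 0))} \<subseteq> I
            \<and> (\<forall>d. \<forall>x\<in>I. deriv d x \<in> I)}"

lemma J_eq: "J_ideal n = \<Inter>(JF n)"
  by (simp add: J_ideal_def diff_ideal_gen_def JF_def)

lemma carrier_JF: "carrier (A_ring n) \<in> JF n"
proof -
  interpret cring "A_ring n" by (rule A_cring)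
  show ?thesis
    unfolding JF_def using oneideal
    by (auto simp: carrier_A validp_deriv validp_Var)
qed

lemma J_ideal: "ideal (J_ideal n) (A_ring n)"
proof -
  interpret cring "A_ring n" by (rule A_cring)
  show ?thesis unfolding J_eq
    by (rule i_Intersect) (use carrier_JF in \<open>auto simp: JF_def\<close>)
qed

lemma J_deriv: "x \<in> J_ideal n \<Longrightarrow> deriv d x \<in> J_ideal n"
  unfolding J_eq JF_def by auto

lemma J_gen1: "deriv D1 (Var (X2, 0, 0)) \<in> J_ideal n"
  unfolding J_eq JF_def by auto
lemma J_gen2: "deriv D2 (Var (X1, 0, 0)) \<in> J_ideal n"
  unfolding J_eq JF_def by auto

lemma J_sub: "J_ideal n \<subseteq> carrier (A_ring n)"
  unfolding J_eq using carrier_JF by auto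

lemma J_add: "x \<in> J_ideal n \<Longrightarrow> y \<in> J_ideal n \<Longrightarrow> x + y \<in> J_ideal n"
  using additive_subgroup.a_closed[OF ideal.axioms(1)[OF J_ideal]] by (simp add: A_ring_def)

lemma J_zero: "0 \<in> J_ideal n"
  using additive_subgroup.zero_closed[OF ideal.axioms(1)[OF J_ideal]] by (simp add: A_ring_def)

lemma J_mult: "x \<in> J_ideal n \<Longrightarrow> y \<in> carrier (A_ring n) \<Longrightarrow> x * y \<in> J_ideal n"
  using ideal.I_r_closed[OF J_ideal] by (simp add: A_ring_def)

lemma J_uminus: "x \<in> J_ideal n \<Longrightarrow> - x \<in> J_ideal n"
proof -
  assume x: "x \<in> J_ideal n"
  have "(-1) \<in> carrier (A_ring n :: 'a dpoly ring)"
    by (simp add: carrier_A validp_uminus validp_one)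
  from ideal.I_l_closed[OF J_ideal x this] show ?thesis by (simp add: A_ring_def)
qed

lemma J_diff: "x \<in> J_ideal n \<Longrightarrow> y \<in> J_ideal n \<Longrightarrow> x - y \<in> J_ideal n"
  using J_add J_uminus by (metis diff_conv_add_uminus)

lemma coset_img: "J +>\<^bsub>A_ring n\<^esub> p = (\<lambda>j. j + p) ` J"
  by (auto simp: a_r_coset_def r_coset_def A_ring_def)

lemma classB_img: "classB n p = (\<lambda>j. j + p) ` J_ideal n"
  by (simp add: classB_def coset_img)

lemma class_eq: "p - q \<in> J_ideal n \<Longrightarrow> classB n p = classB n q"
  unfolding classB_img
proof (intro equalityI subsetI)
  fix x assume d: "p - q \<in> J_ideal n"
  { assume "x \<in> (\<lambda>j. j + p) ` J_ideal n"
    then obtain j where j: "j \<in> J_ideal n" "x = j + p" by auto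
    then have "x = (j + (p - q)) + q" by simp
    with J_add[OF j(1) d] show "x \<in> (\<lambda>j. j + q) ` J_ideal n" by blast }
  { assume "x \<in> (\<lambda>j. j + q) ` J_ideal n"
    then obtain j where j: "j \<in> J_ideal n" "x = j + q" by auto
    then have "x = (j - (p - q)) + p" by simp
    with J_diff[OF j(1) d] show "x \<in> (\<lambda>j. j + p) ` J_ideal n" by blast }
qed

lemma class_zero: "classB n 0 = J_ideal n"
  by (simp add: classB_img)

lemma class_carrier: "p \<in> carrier (A_ring n) \<Longrightarrow> classB n p \<in> carrier (B_ring n)"
  using ring_hom_closed[OF ideal.rcos_ring_hom[OF J_ideal]]
  by (simp add: classB_def B_ring_def)

lemma class_mult: "p \<in> carrier (A_ring n) \<Longrightarrow> q \<in> carrier (A_ring n) \<Longrightarrow>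
   classB n p \<otimes>\<^bsub>B_ring n\<^esub> classB n q = classB n (p * q)"
  unfolding classB_def B_ring_def FactRing_def
  using ideal.rcoset_mult_add[OF J_ideal, of p n q] by simp



lemma B_add_def: "X \<oplus>\<^bsub>B_ring n\<^esub> Y = (\<Union>x\<in>X. \<Union>y\<in>Y. {x + y})"
  by (simp add: B_ring_def FactRing_def set_add_def set_mult_def A_ring_def)

lemma class_add: "classB n p \<oplus>\<^bsub>B_ring n\<^esub> classB n q = classB n (p + q)"
proof (intro equalityI subsetI)
  fix x assume "x \<in> classB n p \<oplus>\<^bsub>B_ring n\<^esub> classB n q"
  then obtain j1 j2 where j: "j1 \<in> J_ideal n" "j2 \<in> J_ideal n" "x = (j1 + p) + (j2 + q)"
    unfolding B_add_def classB_img by blast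
  then have "x = (j1 + j2) + (p + q)" by (simp add: algebra_simps)
  with J_add[OF j(1,2)] show "x \<in> classB n (p + q)" unfolding classB_img by blast
next
  fix x assume "x \<in> classB n (p + q)"
  then obtain j where j: "j \<in> J_ideal n" "x = j + (p + q)" unfolding classB_img by blast
  then have "x = (j + p) + (0 + q)" by (simp add: algebra_simps)
  moreover have "j + p \<in> classB n p" "0 + q \<in> classB n q" using j(1) J_zero unfolding classB_img by blast+
  ultimately show "x \<in> classB n p \<oplus>\<^bsub>B_ring n\<^esub> classB n q" unfolding B_add_def by blast
qed

lemma derivB_alt: "derivB n d X = (\<Union>j\<in>J_ideal n. \<Union>y\<in>X. {j + deriv d y})"
  by (auto simp: derivB_def set_add_def set_mult_def A_ring_def)

lemma class_deriv: "derivB n d (classB n p) = classB n (deriv d p)"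
proof (intro equalityI subsetI)
  fix x assume "x \<in> derivB n d (classB n p)"
  then obtain j1 j2 where j: "j1 \<in> J_ideal n" "j2 \<in> J_ideal n" "x = j1 + deriv d (j2 + p)"
    unfolding derivB_alt classB_img by blast
  then have "x = (j1 + deriv d j2) + deriv d p" by (simp add: deriv_add algebra_simps)
  with J_add[OF j(1) J_deriv[OF j(2)]] show "x \<in> classB n (deriv d p)" unfolding classB_img by blast
next
  fix x assume "x \<in> classB n (deriv d p)"
  then obtain j where j: "j \<in> J_ideal n" "x = j + deriv d p" unfolding classB_img by blast
  then have "x = j + deriv d (0 + p)" by simp
  moreover have "0 + p \<in> classB n p" using J_zero unfolding classB_img by blast
  ultimately show "x \<in> derivB n d (classB n p)" unfolding derivB_alt using j(1) by blast
qed



lemma sh1: "(sh D1 ^^ k) (y, a, b) = (y, a + k, b)"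
  by (induction k) auto
lemma sh2: "(sh D2 ^^ k) (y, a, b) = (y, a, b + k)"
  by (induction k) auto

lemma validQ: "i \<le> n \<Longrightarrow> Var (Q i, a, b) \<in> carrier (A_ring n)"
  by (simp add: Var_carrier)
lemma validX1: "Var (X1, a, b) \<in> carrier (A_ring n)"
  by (simp add: Var_carrier)
lemma validX2: "Var (X2, a, b) \<in> carrier (A_ring n)"
  by (simp add: Var_carrier)

lemma carrier_diff: "p \<in> carrier (A_ring n) \<Longrightarrow> q \<in> carrier (A_ring n) \<Longrightarrow> p - q \<in> carrier (A_ring n)"
  by (simp add: carrier_A validp_diff)
lemma carrier_mult: "p \<in> carrier (A_ring n) \<Longrightarrow> q \<in> carrier (A_ring n) \<Longrightarrow> p * q \<in> carrier (A_ring n)"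
  by (simp add: carrier_A validp_mult)

locale setting =
  fixes n :: nat and M :: minsky and I :: "'a::comm_ring_1 dpoly set set"
  assumes wf: "minsky_wf n M" and Iid: "ideal I (B_ring n)"
    and gen: "\<And>i e s. M i e s \<noteq> None \<Longrightarrow> classB n (g_lift M i e s) \<in> I"
    and clo: "\<And>d x. x \<in> I \<Longrightarrow> derivB n d x \<in> I"
begin

lemma I_mult: "p \<in> carrier (A_ring n) \<Longrightarrow> q \<in> carrier (A_ring n) \<Longrightarrow> classB n q \<in> I \<Longrightarrow> classB n (p * q) \<in> I"
proof -
  assume p: "p \<in> carrier (A_ring n)" and q: "q \<in> carrier (A_ring n)" and c: "classB n q \<in> I"
  have "classB n p \<otimes>\<^bsub>B_ring n\<^esub> classB n q \<in> I"
    by (rule ideal.I_l_closed[OF Iid c class_carrier[OF p]])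
  then show ?thesis by (simp only: class_mult[OF p q])
qed

lemma I_add: "classB n p \<in> I \<Longrightarrow> classB n q \<in> I \<Longrightarrow> classB n (p + q) \<in> I"
proof -
  assume p: "classB n p \<in> I" and q: "classB n q \<in> I"
  have "classB n p \<oplus>\<^bsub>B_ring n\<^esub> classB n q \<in> I"
    by (rule additive_subgroup.a_closed[OF ideal.axioms(1)[OF Iid] p q])
  then show ?thesis by (simp only: class_add)
qed

lemma I_zero: "classB n 0 \<in> I"
  using additive_subgroup.zero_closed[OF ideal.axioms(1)[OF Iid]]
  by (simp add: class_zero B_ring_def FactRing_def)

lemma I_deriv: "classB n p \<in> I \<Longrightarrow> classB n (deriv d p) \<in> I"
  using clo[of "classB n p" d] class_deriv[of n d p] by simp

lemma I_eq: "classB n p \<in> I \<Longrightarrow> p - q \<in> J_ideal n \<Longrightarrow> classB n q \<in> I"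
  using class_eq[of p q n] by simp

lemma shift: "classB n (Var u - Var w) \<in> I \<Longrightarrow> classB n (Var ((sh d ^^ k) u) - Var ((sh d ^^ k) w)) \<in> I"
proof (induction k)
  case (Suc k)
  from I_deriv[OF Suc.IH[OF Suc.prems], of d] show ?case
    by (simp add: deriv_diff deriv_Var)
qed simp

lemma shiftx1:
  assumes "i \<le> n" "j \<le> n"
    and "classB n (Var (X1,0,0) * Var (Q i, a, b) - Var (X1,0,0) * Var (Q j, a', b')) \<in> I"
  shows "classB n (Var (X1,0,0) * Var (Q i, a, b + k) - Var (X1,0,0) * Var (Q j, a', b' + k)) \<in> I"
proof (induction k)
  case 0 then show ?case using assms by simp
next
  case (Suc k)
  let ?u = "(Q i, a, b + k)" and ?w = "(Q j, a', b' + k)"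
  have A: "classB n (deriv D2 (Var (X1,0,0) * Var ?u - Var (X1,0,0) * Var ?w)) \<in> I"
    by (rule I_deriv[OF Suc.IH])
  moreover have E: "deriv D2 (Var (X1,0,0) * Var ?u - Var (X1,0,0) * Var ?w)
     - (Var (X1,0,0) * Var (Q i, a, b + Suc k) - Var (X1,0,0) * Var (Q j, a', b' + Suc k))
     = Var (X1, 0, 1) * (Var ?u - Var ?w)"
    by (simp add: deriv_diff deriv_Var2 algebra_simps)
  moreover have Jm: "Var (X1, 0, 1) * (Var ?u - Var ?w) \<in> J_ideal n"
    using J_mult[OF J_gen2[of n, unfolded deriv_Var, simplified] carrier_diff[OF validQ[OF assms(1)] validQ[OF assms(2)]]] by simp
  ultimately show ?case by (intro I_eq[OF A]) (subst E, rule Jm)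
qed

lemma shiftx2:
  assumes "i \<le> n" "j \<le> n"
    and "classB n (Var (X2,0,0) * Var (Q i, a, b) - Var (X2,0,0) * Var (Q j, a', b')) \<in> I"
  shows "classB n (Var (X2,0,0) * Var (Q i, a + k, b) - Var (X2,0,0) * Var (Q j, a' + k, b')) \<in> I"
proof (induction k)
  case 0 then show ?case using assms by simp
next
  case (Suc k)
  let ?u = "(Q i, a + k, b)" and ?w = "(Q j, a' + k, b')"
  have A: "classB n (deriv D1 (Var (X2,0,0) * Var ?u - Var (X2,0,0) * Var ?w)) \<in> I"
    by (rule I_deriv[OF Suc.IH])
  moreover have E: "deriv D1 (Var (X2,0,0) * Var ?u - Var (X2,0,0) * Var ?w)
     - (Var (X2,0,0) * Var (Q i, a + Suc k, b) - Var (X2,0,0) * Var (Q j, a' + Suc k, b'))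
     = Var (X2, 1, 0) * (Var ?u - Var ?w)"
    by (simp add: deriv_diff deriv_Var2 algebra_simps)
  moreover have Jm: "Var (X2, 1, 0) * (Var ?u - Var ?w) \<in> J_ideal n"
    using J_mult[OF J_gen1[of n, unfolded deriv_Var, simplified] carrier_diff[OF validQ[OF assms(1)] validQ[OF assms(2)]]] by simp
  ultimately show ?case by (intro I_eq[OF A]) (subst E, rule Jm)
qed

end


definition hh :: "nat \<times> nat \<times> nat \<Rightarrow> 'a::comm_ring_1 dpoly" where
  "hh c = (case c of (i, a, b) \<Rightarrow> Var (X1,0,0) * Var (X2,0,0) * Var (Q i, a, b))"

context setting
begin

lemma mstep_I:
  assumes "mstep M (i,a,b) (j,a',b')"
  shows "classB n (Var (X1,0,0) * Var (X2,0,0) * Var (Q i,a,b) - Var (X1,0,0) * Var (X2,0,0) * Var (Q j,a',b')) \<in> I"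
proof -
  from assms obtain \<alpha> \<beta> where Mi: "M i (a=0) (b=0) = Some (j,\<alpha>,\<beta>)" and ea: "int a' = int a + \<alpha>"
    and eb: "int b' = int b + \<beta>"
    by (auto simp: mstep_def)
  have w1: "\<And>i e s. (i < 1 \<or> n < i) \<Longrightarrow> M i e s = None" using wf unfolding minsky_wf_def by auto
  have w2: "j \<le> n \<and> \<alpha> \<in> {-1, 0, 1} \<and> \<beta> \<in> {-1, 0, 1} \<and> ((a=0) \<longrightarrow> \<alpha> \<ge> 0) \<and> ((b=0) \<longrightarrow> \<beta> \<ge> 0)"
    using wf Mi unfolding minsky_wf_def by auto
  have "\<not> (i < 1 \<or> n < i)"
  proof
    assume "i < 1 \<or> n < i"
    from w1[OF this, of "a=0" "b=0"] Mi show False by simp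
  qed
  then have inn: "i \<le> n" "j \<le> n" using w2 by auto
  have G: "classB n (g_lift M i (a=0) (b=0)) \<in> I" using gen Mi by simp
  consider (pp) "a>0" "b>0" | (zp) "a=0" "b>0" | (pz) "a>0" "b=0" | (zz) "a=0" "b=0" by auto
  then show ?thesis
  proof cases
    case pp
    have g: "g_lift M i (a=0) (b=0) = Var (Q i,1,1) - Var (Q j, nat (1+\<alpha>), nat (1+\<beta>))"
      using pp Mi by (simp add: g_lift_def dop_Var)
    have "classB n (Var (Q i,1+(a-1),1) - Var (Q j,nat (1+\<alpha>)+(a-1),nat (1+\<beta>))) \<in> I"
      using shift[OF G[unfolded g], where d=D1 and k="a-1"] by (simp only: sh1)
    from shift[OF this, where d=D2 and k="b-1"]
    have "classB n (Var (Q i,1+(a-1),1+(b-1)) - Var (Q j,nat (1+\<alpha>)+(a-1),nat (1+\<beta>)+(b-1))) \<in> I"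
      by (simp only: sh2)
    moreover have "1+(a-1) = a" "1+(b-1) = b" "nat (1+\<alpha>)+(a-1) = a'" "nat (1+\<beta>)+(b-1) = b'"
      using pp ea eb w2 by auto
    ultimately have "classB n (Var (Q i,a,b) - Var (Q j,a',b')) \<in> I" by simp
    from I_mult[OF carrier_mult[OF validX1 validX2] carrier_diff[OF validQ[OF inn(1)] validQ[OF inn(2)]] this]
    show ?thesis by (simp add: algebra_simps)
  next
    case zp
    have g: "g_lift M i (a=0) (b=0) = Var (X1,0,0) * Var (Q i,0,1) - Var (X1,0,0) * Var (Q j, nat \<alpha>, nat (1+\<beta>))"
      using zp Mi by (simp add: g_lift_def dop_Var)
    from shiftx1[OF inn G[unfolded g], of "b-1"]
    have "classB n (Var (X1,0,0) * Var (Q i,0,1+(b-1)) - Var (X1,0,0) * Var (Q j,nat \<alpha>,nat (1+\<beta>)+(b-1))) \<in> I" .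
    moreover have "1+(b-1) = b" "nat \<alpha> = a'" "nat (1+\<beta>)+(b-1) = b'"
      using zp ea eb w2 by auto
    ultimately have "classB n (Var (X1,0,0) * Var (Q i,a,b) - Var (X1,0,0) * Var (Q j,a',b')) \<in> I"
      using zp by simp
    from I_mult[OF validX2 carrier_diff[OF carrier_mult[OF validX1 validQ[OF inn(1)]] carrier_mult[OF validX1 validQ[OF inn(2)]]] this]
    show ?thesis by (simp add: algebra_simps)
  next
    case pz
    have g: "g_lift M i (a=0) (b=0) = Var (X2,0,0) * Var (Q i,1,0) - Var (X2,0,0) * Var (Q j, nat (1+\<alpha>), nat \<beta>)"
      using pz Mi by (simp add: g_lift_def dop_Var)
    from shiftx2[OF inn G[unfolded g], of "a-1"]
    have "classB n (Var (X2,0,0) * Var (Q i,1+(a-1),0) - Var (X2,0,0) * Var (Q j,nat (1+\<alpha>)+(a-1),nat \<beta>)) \<in> I" .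
    moreover have "1+(a-1) = a" "nat \<beta> = b'" "nat (1+\<alpha>)+(a-1) = a'"
      using pz ea eb w2 by auto
    ultimately have "classB n (Var (X2,0,0) * Var (Q i,a,b) - Var (X2,0,0) * Var (Q j,a',b')) \<in> I"
      using pz by simp
    from I_mult[OF validX1 carrier_diff[OF carrier_mult[OF validX2 validQ[OF inn(1)]] carrier_mult[OF validX2 validQ[OF inn(2)]]] this]
    show ?thesis by (simp add: algebra_simps)
  next
    case zz
    have g: "g_lift M i (a=0) (b=0) = Var (X1,0,0) * Var (X2,0,0) * Var (Q i,0,0) - Var (X1,0,0) * Var (X2,0,0) * Var (Q j, nat \<alpha>, nat \<beta>)"
      using zz Mi by (simp add: g_lift_def dop_Var)
    have e: "nat \<alpha> = a'" "nat \<beta> = b'"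
      using zz ea eb w2 by auto
    show ?thesis using G[unfolded g] zz e by simp
  qed
qed

lemma reach: "(mstep M)\<^sup>*\<^sup>* c c' \<Longrightarrow> classB n (hh c - hh c') \<in> I"
proof (induction rule: rtranclp_induct)
  case base
  then show ?case using I_zero by simp
next
  case (step y z)
  obtain i a b where y: "y = (i,a,b)" by (cases y) auto
  obtain j a' b' where z: "z = (j,a',b')" by (cases z) auto
  have "classB n (hh y - hh z) \<in> I" using step(2) mstep_I[of i a b j a' b'] unfolding y z hh_def by simp
  from I_add[OF step(3) this] show ?case by simp
qed

end

theorem corollary2:
  fixes n :: nat and M :: minsky and S :: "nat set" and m :: nat
  assumes wf: "minsky_wf n M"
    and acyc: "minsky_acyclic M"
    and halt: "\<And>x. x \<in> S \<Longrightarrow> reaches M (1, 2 ^ 2 ^ x, 0) (0, 1, 0)"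
    and loop: "\<And>x. x \<notin> S \<Longrightarrow> runs_forever M (1, 2 ^ 2 ^ x, 0)"
    and mS: "m \<in> S"
  shows "(g_m n m :: ('a::comm_ring_1 dpoly) set) \<in> I_tilde n M"
proof -
  have "(g_m n m :: 'a dpoly set) \<in> I"
    if I: "I \<in> {I. ideal I (B_ring n) \<and> {classB n (g_lift M i e s) | i e s. M i e s \<noteq> None} \<subseteq> I
                   \<and> (\<forall>d. \<forall>x\<in>I. derivB n d x \<in> I)}" for I :: "'a dpoly set set"
  proof -
    interpret setting n M I
    proof (rule setting.intro[OF wf])
      show "ideal I (B_ring n)" using I by simp
      show "\<And>d x. x \<in> I \<Longrightarrow> derivB n d x \<in> I" using I by simp
      fix i e s assume "M i e s \<noteq> None"
      then have "classB n (g_lift M i e s) \<in> {classB n (g_lift M i e s) | i e s. M i e s \<noteq> None}" by blast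
      moreover have "{classB n (g_lift M i e s) | i e s. M i e s \<noteq> None} \<subseteq> I"
        using I[unfolded mem_Collect_eq] by (rule conjunct1[OF conjunct2])
      ultimately show "classB n (g_lift M i e s) \<in> I" by (rule rev_subsetD)
    qed
    from halt[OF mS] have "(mstep M)\<^sup>*\<^sup>* (1, 2 ^ 2 ^ m, 0) (0, 1, 0)" by (simp add: reaches_def)
    from reach[OF this] show ?thesis by (simp add: g_m_def dop_Var hh_def)
  qed
  then show ?thesis unfolding I_tilde_def diff_ideal_gen_def by blast
qed


end
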